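(* Let $\sigma=(1\,2\,\cdots\,n)\in\mathrm{Sym}(n)$. For every $\epsilon>0$, for all sufficiently large $n$ there exist two finite generating sets $S_{\rm pos}$ and $S_{\rm neg}$ of $\mathrm{Sym}(n)$ (each symmetric, not containing $e$) such that: with respect to $S_{\rm pos}$, $|\sigma|=2$, $\mathrm{Av}(\sigma)<1+\epsilon$ and $\kappa(\sigma)>\frac{1-\epsilon}{2}$; and with respect to $S_{\rm neg}$, $|\sigma|=1$, $\mathrm{Av}(\sigma)>3-\epsilon$ and $\kappa(\sigma)<-2+\epsilon$.
   Context: For a group with finite generating set $S$ ($S=S^{-1}$, $e\notin S$), $|x|$ is word length, $\mathrm{Av}(g)=\frac{1}{|S|}\sum_{a\in S}|a^{-1}ga|$, and for $g\neq e$ the curvature is $\kappa(g)=\frac{|g|-\mathrm{Av}(g)}{|g|}$. *)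

theory Defs
  imports "HOL-Combinatorics.Permutations" Complex_Main
begin

definition sym :: "nat \<Rightarrow> (nat \<Rightarrow> nat) set" where
  "sym n = {p. p permutes {1..n}}"

definition ncycle :: "nat \<Rightarrow> nat \<Rightarrow> nat" where
  "ncycle n i = (if 1 \<le> i \<and> i < n then i + 1 else if i = n \<and> 1 \<le> n then 1 else i)"

definition word_prod :: "(nat \<Rightarrow> nat) list \<Rightarrow> nat \<Rightarrow> nat" where
  "word_prod ws = foldr (\<circ>) ws id"

definition sym_gen_set :: "nat \<Rightarrow> (nat \<Rightarrow> nat) set \<Rightarrow> bool" where
  "sym_gen_set n S \<longleftrightarrow> finite S \<and> S \<subseteq> sym n \<and> id \<notin> S \<and> (\<forall>a\<in>S. inv a \<in> S)
     \<and> (\<forall>g\<in>sym n. \<exists>ws. set ws \<subseteq> S \<and> word_prod ws = g)"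

definition word_len :: "(nat \<Rightarrow> nat) set \<Rightarrow> (nat \<Rightarrow> nat) \<Rightarrow> nat" where
  "word_len S g = (LEAST k. \<exists>ws. length ws = k \<and> set ws \<subseteq> S \<and> word_prod ws = g)"

definition Av :: "(nat \<Rightarrow> nat) set \<Rightarrow> (nat \<Rightarrow> nat) \<Rightarrow> real" where
  "Av S g = (\<Sum>a\<in>S. real (word_len S (inv a \<circ> g \<circ> a))) / real (card S)"

definition curv :: "(nat \<Rightarrow> nat) set \<Rightarrow> (nat \<Rightarrow> nat) \<Rightarrow> real" where
  "curv S g = (real (word_len S g) - Av S g) / real (word_len S g)"

end

theory Submission
  imports Defs
begin


definition ncinv :: "nat \<Rightarrow> nat \<Rightarrow> nat" where
  "ncinv n i = (if 1 < i \<and> i \<le> n then i - 1 else if i = 1 \<and> 1 \<le> n then n else i)"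

lemma nc_o_inv: "ncycle n \<circ> ncinv n = id"
  by (auto simp: fun_eq_iff ncycle_def ncinv_def)

lemma inv_o_nc: "ncinv n \<circ> ncycle n = id"
  by (auto simp: fun_eq_iff ncycle_def ncinv_def)

lemma nc_permutes: "ncycle n permutes {1..n}"
proof -
  have "bij (ncycle n)" using nc_o_inv inv_o_nc by (metis o_bij)
  then have "\<forall>y. \<exists>!x. ncycle n x = y" by (metis bij_iff)
  then show ?thesis unfolding permutes_def by (auto simp: ncycle_def)
qed

lemma inv_nc: "inv (ncycle n) = ncinv n"
  using inv_unique_comp[OF nc_o_inv inv_o_nc] by simp



lemma wl_le: "set ws \<subseteq> S \<Longrightarrow> word_prod ws = g \<Longrightarrow> word_len S g \<le> length ws"
  unfolding word_len_def by (rule Least_le) blast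

lemma wl_ge:
  assumes "\<exists>ws. set ws \<subseteq> S \<and> word_prod ws = g"
    and "\<And>ws. set ws \<subseteq> S \<Longrightarrow> word_prod ws = g \<Longrightarrow> k \<le> length ws"
  shows "k \<le> word_len S g"
proof -
  have "\<exists>k ws. length ws = k \<and> set ws \<subseteq> S \<and> word_prod ws = g" using assms(1) by blast
  from LeastI_ex[OF this] obtain ws where "length ws = word_len S g" "set ws \<subseteq> S" "word_prod ws = g"
    unfolding word_len_def by blast
  then show ?thesis using assms(2) by metis
qed

lemma wp0: "word_prod [] = id" by (simp add: word_prod_def)
lemma wp1: "word_prod [a] = a" by (simp add: word_prod_def)
lemma wp2: "word_prod [a,b] = a \<circ> b" by (simp add: word_prod_def)
lemma wpc: "word_prod (a # ws) = a \<circ> word_prod ws" by (simp add: word_prod_def)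

lemma wl_ge2:
  assumes "\<exists>ws. set ws \<subseteq> S \<and> word_prod ws = g" "g \<noteq> id" "g \<notin> S"
  shows "2 \<le> word_len S g"
proof (rule wl_ge[OF assms(1)])
  fix ws assume ws: "set ws \<subseteq> S" "word_prod ws = g"
  show "2 \<le> length ws"
  proof (rule ccontr)
    assume "\<not> 2 \<le> length ws"
    then have "ws = [] \<or> (\<exists>a. ws = [a])"
      by (cases ws; cases "tl ws") auto
    then show False using ws assms(2,3) wp0 wp1 by auto
  qed
qed

lemma wl_ge3:
  assumes "\<exists>ws. set ws \<subseteq> S \<and> word_prod ws = g" "g \<noteq> id" "g \<notin> S"
    "\<And>s t. s \<in> S \<Longrightarrow> t \<in> S \<Longrightarrow> s \<circ> t \<noteq> g"
  shows "3 \<le> word_len S g"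
proof (rule wl_ge[OF assms(1)])
  fix ws assume ws: "set ws \<subseteq> S" "word_prod ws = g"
  show "3 \<le> length ws"
  proof (rule ccontr)
    assume "\<not> 3 \<le> length ws"
    then have "ws = [] \<or> (\<exists>a. ws = [a]) \<or> (\<exists>a b. ws = [a,b])"
      by (cases ws; cases "tl ws"; cases "tl (tl ws)") auto
    moreover have "ws \<noteq> []" using ws assms(2) wp0 by metis
    moreover have "ws \<noteq> [a]" for a using ws assms(3) wp1 by (metis list.set_intros(1) subsetD)
    moreover have "ws \<noteq> [a,b]" for a b
    proof
      assume "ws = [a,b]"
      then have "a \<in> S" "b \<in> S" "a \<circ> b = g" using ws wp2 by auto
      then show False using assms(4) by metis
    qed
    ultimately show False by blast
  qed
qed

lemma neq_at: "f x \<noteq> g x \<Longrightarrow> f \<noteq> g" by auto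

lemma nc_pow: "k < n \<Longrightarrow> (ncycle n ^^ k) 1 = k + 1"
  by (induction k) (auto simp: ncycle_def)

lemma determined:
  assumes a: "a permutes {1..n}" and b: "b permutes {1..n}"
    and ha: "\<And>x. a (ncycle n x) = f (a x)" and hb: "\<And>x. b (ncycle n x) = f (b x)"
    and e: "a 1 = b 1"
  shows "a = b"
proof
  fix x
  have ka: "a ((ncycle n ^^ k) y) = (f ^^ k) (a y)" for k y
    by (induction k) (auto simp: ha)
  have kb: "b ((ncycle n ^^ k) y) = (f ^^ k) (b y)" for k y
    by (induction k) (auto simp: hb)
  show "a x = b x"
  proof (cases "x \<in> {1..n}")
    case True
    then have "x = (ncycle n ^^ (x - 1)) 1" using nc_pow[of "x-1" n] by auto
    then show ?thesis using ka[of "x-1" 1] kb[of "x-1" 1] e by metis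
  next
    case False
    then show ?thesis using a b by (simp add: permutes_not_in)
  qed
qed

lemma card_det:
  assumes n1: "1 \<le> n"
  shows "card {a. a permutes {1..n} \<and> (\<forall>x. a (ncycle n x) = f (a x))} \<le> n"
proof -
  let ?A = "{a. a permutes {1..n} \<and> (\<forall>x. a (ncycle n x) = f (a x))}"
  have "inj_on (\<lambda>a. a 1) ?A"
    by (rule inj_onI) (use determined in blast)
  moreover have "(\<lambda>a. a 1) ` ?A \<subseteq> {1..n}"
  proof
    fix y assume "y \<in> (\<lambda>a. a 1) ` ?A"
    then obtain a where "a permutes {1..n}" "y = a 1" by auto
    then show "y \<in> {1..n}"
      using n1 permutes_in_image[of a "{1..n}" 1] by auto
  qed
  ultimately have "card ?A \<le> card {1..n}" by (intro card_inj_on_le) auto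
  then show ?thesis by simp
qed



definition SposS :: "nat \<Rightarrow> (nat \<Rightarrow> nat) set" where
  "SposS n = sym n - {id, ncycle n, ncinv n}"

lemma sym_finite: "finite (sym n)"
  unfolding sym_def by (rule finite_permutations) simp

lemma sym_card: "card (sym n) = fact n"
  unfolding sym_def by (rule card_permutations) auto

lemma ncinv_perm: "ncinv n permutes {1..n}"
  using permutes_inv[OF nc_permutes] inv_nc by metis

lemma nc_sym: "ncycle n \<in> sym n" "ncinv n \<in> sym n"
  using nc_permutes ncinv_perm by (auto simp: sym_def)

lemma tau_sym: "2 \<le> n \<Longrightarrow> Transposition.transpose 1 2 \<in> sym n"
  unfolding sym_def by (auto intro: permutes_swap_id)

lemma gen2:
  assumes n: "5 \<le> n" and g: "g \<in> {ncycle n, ncinv n}"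
  shows "g \<circ> Transposition.transpose 1 2 \<in> SposS n" "Transposition.transpose 1 2 \<in> SposS n"
proof -
  let ?t = "Transposition.transpose (1::nat) 2"
  have gs: "g \<in> sym n" using g nc_sym by auto
  have ts: "?t \<in> sym n" using tau_sym n by auto
  have "g \<circ> ?t \<in> sym n" using gs ts unfolding sym_def by (auto intro: permutes_compose)
  moreover have "g \<circ> ?t \<noteq> id" "g \<circ> ?t \<noteq> ncycle n" "g \<circ> ?t \<noteq> ncinv n"
  proof -
    show "g \<circ> ?t \<noteq> id"
      using g n by (auto intro!: neq_at[of _ 3] simp: ncycle_def ncinv_def)
    show "g \<circ> ?t \<noteq> ncycle n"
      using g n by (auto intro!: neq_at[of _ 1] simp: ncycle_def ncinv_def)
    show "g \<circ> ?t \<noteq> ncinv n"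
      using g n by (auto intro!: neq_at[of _ 1] simp: ncycle_def ncinv_def)
  qed
  ultimately show "g \<circ> ?t \<in> SposS n" by (simp add: SposS_def)
  have t1: "?t \<noteq> id" "?t \<noteq> ncinv n"
    using n by (auto intro!: neq_at[of _ 1] simp: ncycle_def ncinv_def)
  moreover have "?t \<noteq> ncycle n"
    using n by (auto intro!: neq_at[of _ 3] simp: ncycle_def ncinv_def)
  ultimately show "?t \<in> SposS n" using ts by (simp add: SposS_def)
qed

lemma word_exists_pos:
  assumes n: "5 \<le> n" and g: "g \<in> sym n"
  shows "\<exists>ws. set ws \<subseteq> SposS n \<and> word_prod ws = g \<and> length ws \<le> 2 \<and> (g \<in> SposS n \<longrightarrow> length ws \<le> 1)"
proof -
  let ?t = "Transposition.transpose (1::nat) 2"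
  consider "g = id" | "g \<in> SposS n" | "g \<in> {ncycle n, ncinv n}" using g by (auto simp: SposS_def)
  then show ?thesis
  proof cases
    case 1 then show ?thesis by (intro exI[of _ "[]"]) (auto simp: wp0 SposS_def)
  next
    case 2 then show ?thesis by (intro exI[of _ "[g]"]) (auto simp: wp1)
  next
    case 3
    have "word_prod [g \<circ> ?t, ?t] = g" by (simp add: wp2 comp_assoc)
    moreover have "g \<notin> SposS n" using 3 by (auto simp: SposS_def)
    ultimately show ?thesis using gen2[OF n 3] by (intro exI[of _ "[g \<circ> ?t, ?t]"]) auto
  qed
qed

lemma pos_gen: "5 \<le> n \<Longrightarrow> sym_gen_set n (SposS n)"
  unfolding sym_gen_set_def
proof (intro conjI ballI)
  assume n: "5 \<le> n"
  show "finite (SposS n)" using sym_finite by (simp add: SposS_def)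
  show "SposS n \<subseteq> sym n" by (auto simp: SposS_def)
  show "id \<notin> SposS n" by (auto simp: SposS_def)
  fix a assume a: "a \<in> SposS n"
  then have ap: "a permutes {1..n}" by (auto simp: SposS_def sym_def)
  have ii: "inv (inv a) = a" using permutes_inv_inv[OF ap] .
  have "inv a \<in> sym n" using permutes_inv[OF ap] by (simp add: sym_def)
  moreover have "inv a \<noteq> id" using ii a by (auto simp: SposS_def)
  moreover have "inv a \<noteq> ncycle n" using ii a inv_nc by (auto simp: SposS_def)
  moreover have "inv a \<noteq> ncinv n" using ii a inv_nc permutes_inv_inv[OF nc_permutes]
    by (auto simp: SposS_def)
  ultimately show "inv a \<in> SposS n" by (simp add: SposS_def)
next
  fix g assume "5 \<le> n" "g \<in> sym n"
  then show "\<exists>ws. set ws \<subseteq> SposS n \<and> word_prod ws = g" using word_exists_pos by blast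
qed

lemma wl_pos_le2: "5 \<le> n \<Longrightarrow> g \<in> sym n \<Longrightarrow> word_len (SposS n) g \<le> 2"
proof -
  assume "5 \<le> n" "g \<in> sym n"
  then obtain ws where "set ws \<subseteq> SposS n" "word_prod ws = g" "length ws \<le> 2"
    using word_exists_pos by blast
  then show ?thesis using wl_le by (meson le_trans)
qed

lemma wl_pos_le1: "5 \<le> n \<Longrightarrow> g \<in> SposS n \<Longrightarrow> word_len (SposS n) g \<le> 1"
proof -
  assume "5 \<le> n" "g \<in> SposS n"
  moreover then have "g \<in> sym n" by (auto simp: SposS_def)
  ultimately obtain ws where "set ws \<subseteq> SposS n" "word_prod ws = g" "length ws \<le> 1"
    using word_exists_pos by blast
  then show ?thesis using wl_le by (meson le_trans)
qed

lemma wl_pos_sigma: "5 \<le> n \<Longrightarrow> word_len (SposS n) (ncycle n) = 2"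
proof -
  assume n: "5 \<le> n"
  have "ncycle n \<noteq> id" using n by (auto intro!: neq_at[of _ 1] simp: ncycle_def)
  moreover have "ncycle n \<notin> SposS n" by (simp add: SposS_def)
  ultimately have "2 \<le> word_len (SposS n) (ncycle n)"
    using pos_gen[OF n] nc_sym by (intro wl_ge2) (auto simp: sym_gen_set_def)
  then show ?thesis using wl_pos_le2[OF n] nc_sym by (meson antisym)
qed



lemma fact_big: "5 \<le> n \<Longrightarrow> n * n + 3 \<le> fact n"
proof (induction n rule: nat_induct_at_least)
  case base then show ?case by (simp add: fact_numeral)
next
  case (Suc n)
  have "Suc n * Suc n + 3 \<le> Suc n * (n * n + 3)" using Suc by (simp add: algebra_simps)
  also have "\<dots> \<le> Suc n * fact n" using Suc.IH by (intro mult_le_mono2)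
  finally show ?case by simp
qed

lemma card_Spos: "5 \<le> n \<Longrightarrow> n * n \<le> card (SposS n)"
proof -
  assume n: "5 \<le> n"
  have "card (sym n) - card {id, ncycle n, ncinv n} \<le> card (SposS n)"
    unfolding SposS_def by (rule diff_card_le_card_Diff) simp
  moreover have "card {id, ncycle n, ncinv n} \<le> 3" by (rule order_trans[OF card_insert_le_m1]) (auto simp: card_insert_le_m1)
  ultimately show ?thesis using fact_big[OF n] sym_card[of n] by linarith
qed

lemma ncinv_nc: "ncinv n (ncycle n x) = x"
  using inv_o_nc by (metis comp_apply id_apply)

definition Bset :: "nat \<Rightarrow> (nat \<Rightarrow> nat) set" where
  "Bset n = {a. a permutes {1..n} \<and> (\<forall>x. a (ncycle n x) = ncycle n (a x))}
          \<union> {a. a permutes {1..n} \<and> (\<forall>x. a (ncycle n x) = ncinv n (a x))}"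

lemma card_Bset: "1 \<le> n \<Longrightarrow> card (Bset n) \<le> 2 * n"
  unfolding Bset_def using card_det[of n "ncycle n"] card_det[of n "ncinv n"] card_Un_le
  by (metis (no_types, lifting) add_mono mult_2 order_trans)

lemma finite_Bset: "finite (Bset n)"
proof -
  have "Bset n \<subseteq> sym n" by (auto simp: Bset_def sym_def)
  then show ?thesis using sym_finite finite_subset by blast
qed

lemma conj_len:
  assumes n: "5 \<le> n" and a: "a \<in> SposS n"
  shows "word_len (SposS n) (inv a \<circ> ncycle n \<circ> a) \<le> 1 + (if a \<in> Bset n then 1 else 0)"
proof -
  let ?c = "inv a \<circ> ncycle n \<circ> a"
  have ap: "a permutes {1..n}" using a by (auto simp: SposS_def sym_def)
  have cs: "?c \<in> sym n" using ap nc_permutes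
    by (auto simp: sym_def intro!: permutes_compose permutes_inv)
  show ?thesis
  proof (cases "?c \<in> SposS n")
    case True then show ?thesis using wl_pos_le1[OF n] by (meson add_increasing2 le_trans zero_le)
  next
    case False
    then have "?c = id \<or> ?c = ncycle n \<or> ?c = ncinv n" using cs by (auto simp: SposS_def)
    moreover have "?c \<noteq> id"
    proof
      assume "?c = id"
      then have "inv a (ncycle n (a (inv a 1))) = inv a 1" by (metis comp_apply id_apply)
      then have "ncycle n 1 = 1" using ap by (simp add: permutes_inverses permutes_inv_eq)
      then show False using n by (simp add: ncycle_def)
    qed
    moreover have "a \<in> Bset n" if "?c = ncycle n"
    proof -
      have "\<forall>x. a (ncycle n x) = ncycle n (a x)"
      proof
        fix x
        have "inv a (ncycle n (a x)) = ncycle n x" using that by (metis comp_apply)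
        then show "a (ncycle n x) = ncycle n (a x)" using ap by (metis permutes_inv_eq)
      qed
      then show ?thesis using ap by (auto simp: Bset_def)
    qed
    moreover have "a \<in> Bset n" if "?c = ncinv n"
    proof -
      have "\<forall>x. a (ncycle n x) = ncinv n (a x)"
      proof
        fix x
        have "inv a (ncycle n (a (ncycle n x))) = ncinv n (ncycle n x)" using that by (metis comp_apply)
        then have "ncycle n (a (ncycle n x)) = a x" using ap by (metis permutes_inv_eq ncinv_nc)
        then show "a (ncycle n x) = ncinv n (a x)" by (metis ncinv_nc)
      qed
      then show ?thesis using ap by (auto simp: Bset_def)
    qed
    ultimately show ?thesis using wl_pos_le2[OF n cs] by auto
  qed
qed

lemma av_pos:
  assumes n: "5 \<le> n" and e: "2 < \<epsilon> * real n"
  shows "Av (SposS n) (ncycle n) < 1 + \<epsilon>"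
proof -
  let ?S = "SposS n"
  have fin: "finite ?S" using sym_finite by (simp add: SposS_def)
  have "(\<Sum>a\<in>?S. word_len ?S (inv a \<circ> ncycle n \<circ> a)) \<le> (\<Sum>a\<in>?S. 1 + (if a \<in> Bset n then 1 else 0))"
    by (rule sum_mono) (rule conj_len[OF n])
  also have "\<dots> = (\<Sum>a\<in>?S. 1) + (\<Sum>a\<in>?S. (if a \<in> Bset n then 1 else 0))"
    by (rule sum.distrib)
  also have "\<dots> = card ?S + card (?S \<inter> Bset n)"
    using fin by (simp add: sum.If_cases Int_def)
  also have "\<dots> \<le> card ?S + 2 * n"
    using card_Bset[of n] n card_mono[OF finite_Bset, of "?S \<inter> Bset n" n] by auto
  finally have sum_le: "real (\<Sum>a\<in>?S. word_len ?S (inv a \<circ> ncycle n \<circ> a)) \<le> real (card ?S) + 2 * real n"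
    by linarith
  have C: "real n * real n \<le> real (card ?S)" using card_Spos[OF n] by (metis of_nat_le_iff of_nat_mult)
  have np: "real n > 0" using n by simp
  then have Cp: "real (card ?S) > 0" using C by (smt (verit) mult_pos_pos)
  have "Av ?S (ncycle n) \<le> (real (card ?S) + 2 * real n) / real (card ?S)"
    unfolding Av_def using sum_le Cp by (simp add: divide_right_mono)
  also have "\<dots> < 1 + \<epsilon>"
  proof -
    have "2 * real n < \<epsilon> * real n * real n" using e np by simp
    also have "\<dots> \<le> \<epsilon> * real (card ?S)"
      using C e np by (smt (verit) mult.assoc mult_left_mono mult_pos_pos zero_less_mult_pos2)
    finally show ?thesis using Cp by (simp add: field_simps)
  qed
  finally show ?thesis .
qed



definition Trans :: "nat \<Rightarrow> (nat \<Rightarrow> nat) set" where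
  "Trans n = {Transposition.transpose x y | x y. x \<in> {1..n} \<and> y \<in> {1..n} \<and> x \<noteq> y}"

definition SnegS :: "nat \<Rightarrow> (nat \<Rightarrow> nat) set" where
  "SnegS n = insert (ncycle n) (insert (ncinv n) (Trans n))"

lemma Trans_sym: "Trans n \<subseteq> sym n"
  by (auto simp: Trans_def sym_def intro!: permutes_swap_id)

lemma Sneg_sym: "SnegS n \<subseteq> sym n"
  using Trans_sym nc_sym by (auto simp: SnegS_def)

lemma Trans_gen:
  assumes "p permutes {1..n}" shows "\<exists>ws. set ws \<subseteq> Trans n \<and> word_prod ws = p"
  using assms finite_atLeastAtMost[of 1 n]
proof (induction rule: permutes_induct)
  case id then show ?case by (intro exI[of _ "[]"]) (simp add: wp0)
next
  case (swap a b p)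
  then obtain ws where "set ws \<subseteq> Trans n" "word_prod ws = p" by blast
  moreover have "Transposition.transpose a b \<in> Trans n" using swap by (auto simp: Trans_def)
  ultimately show ?case by (intro exI[of _ "Transposition.transpose a b # ws"]) (simp add: wpc)
qed

lemma neg_gen: "3 \<le> n \<Longrightarrow> sym_gen_set n (SnegS n)"
  unfolding sym_gen_set_def
proof (intro conjI ballI)
  assume n: "3 \<le> n"
  show "finite (SnegS n)" using Sneg_sym sym_finite finite_subset by blast
  show "SnegS n \<subseteq> sym n" by (rule Sneg_sym)
  have "ncycle n \<noteq> id" using n by (auto intro!: neq_at[of _ 1] simp: ncycle_def)
  moreover have "ncinv n \<noteq> id" using n by (auto intro!: neq_at[of _ 1] simp: ncinv_def)
  moreover have "id \<notin> Trans n" by (auto simp: Trans_def) (metis transpose_eq_id_iff)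
  ultimately show "id \<notin> SnegS n" by (auto simp: SnegS_def)
  fix a assume "a \<in> SnegS n"
  moreover have "inv (ncinv n) = ncycle n" using permutes_inv_inv[OF nc_permutes] inv_nc by metis
  ultimately show "inv a \<in> SnegS n" using inv_nc by (auto simp: SnegS_def Trans_def)
next
  fix g assume "g \<in> sym n"
  then obtain ws where "set ws \<subseteq> Trans n" "word_prod ws = g" using Trans_gen by (auto simp: sym_def)
  then show "\<exists>ws. set ws \<subseteq> SnegS n \<and> word_prod ws = g" by (auto simp: SnegS_def)
qed

lemma Trans_fix: "t \<in> Trans n \<Longrightarrow> \<exists>x y. \<forall>z. z \<noteq> x \<longrightarrow> z \<noteq> y \<longrightarrow> t z = z"
proof -
  assume "t \<in> Trans n"
  then obtain x y where "t = Transposition.transpose x y" by (auto simp: Trans_def)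
  then show ?thesis by (intro exI[of _ x] exI[of _ y]) simp
qed

lemma three_in_two: "a \<in> {x,y} \<Longrightarrow> b \<in> {x,y} \<Longrightarrow> c \<in> {x,y} \<Longrightarrow> a \<noteq> b \<Longrightarrow> a \<noteq> c \<Longrightarrow> b \<noteq> c \<Longrightarrow> False"
  by auto

lemma five_in_four:
  fixes p1 p2 p3 p4 p5 :: nat
  assumes "p1 < p2" "p2 < p3" "p3 < p4" "p4 < p5"
    and "{p1,p2,p3,p4,p5} \<subseteq> {a,b,c,d}"
  shows False
proof -
  have "card {p1,p2,p3,p4,p5} = 5" using assms(1-4) by auto
  moreover have "card {a,b,c,d} \<le> 4"
    using card_length[of "[a,b,c,d]"] by simp
  ultimately show False using card_mono[OF _ assms(5)] by fastforce
qed

lemma good_conj: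
  assumes ij: "3 \<le> i" "i + 3 \<le> j" "j + 2 \<le> n"
  shows "3 \<le> word_len (SnegS n) (inv (Transposition.transpose i j) \<circ> ncycle n \<circ> Transposition.transpose i j)"
proof -
  let ?t = "Transposition.transpose i j"
  let ?g = "inv ?t \<circ> ncycle n \<circ> ?t"
  let ?s = "ncycle n" and ?r = "ncinv n"
  have g1: "?g (i - 1) = j" "?g i = j + 1" "?g (j - 1) = i" "?g j = i + 1" "?g n = 1"
    using ij by (auto simp: transpose_def ncycle_def)
  have s1: "?s (i - 1) = i" "?s i = i + 1" "?s j = j + 1" "?s (j - 1) = j"
    using ij by (auto simp: ncycle_def)
  have r1: "?r i = i - 1" "?r j = j - 1" "?r n = n - 1" "?r (i - 1) = i - 2"
    using ij by (auto simp: ncinv_def)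
  have gs: "?g \<in> sym n"
    unfolding sym_def mem_Collect_eq
    by (intro permutes_compose permutes_inv permutes_swap_id nc_permutes) (use ij in auto)
  have ex: "\<exists>ws. set ws \<subseteq> SnegS n \<and> word_prod ws = ?g"
    using neg_gen[of n] gs ij by (auto simp: sym_gen_set_def)
  have notT: "?g \<notin> Trans n"
  proof
    assume "?g \<in> Trans n"
    then obtain x y where fx: "\<forall>z. z \<noteq> x \<longrightarrow> z \<noteq> y \<longrightarrow> ?g z = z" using Trans_fix by blast
    have mv: "z \<in> {x,y}" if "?g z \<noteq> z" for z using fx that by blast
    have "i - 1 \<in> {x,y}" by (rule mv) (use g1 ij in simp)
    moreover have "i \<in> {x,y}" by (rule mv) (use g1 ij in simp)
    moreover have "j \<in> {x,y}" by (rule mv) (use g1 ij in simp)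
    ultimately show False using ij by auto
  qed
  show ?thesis
  proof (rule wl_ge3[OF ex])
    show "?g \<noteq> id" using g1 ij by (intro neq_at[of _ i]) simp
    show "?g \<notin> SnegS n"
    proof -
      have "?g \<noteq> ?s" using g1 s1 ij by (intro neq_at[of _ i]) simp
      moreover have "?g \<noteq> ?r" using g1 r1 ij by (intro neq_at[of _ i]) simp
      ultimately show ?thesis using notT by (simp add: SnegS_def)
    qed
    fix a b assume a: "a \<in> SnegS n" and b: "b \<in> SnegS n"
    show "a \<circ> b \<noteq> ?g"
    proof
      assume eq: "a \<circ> b = ?g"
      then have ev: "a (b z) = ?g z" for z by (metis comp_apply)
      consider "a = ?s \<or> a = ?r" "b = ?s \<or> b = ?r" | "a = ?s" "b \<in> Trans n" | "a = ?r" "b \<in> Trans n"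
        | "a \<in> Trans n" "b = ?s" | "a \<in> Trans n" "b = ?r" | "a \<in> Trans n" "b \<in> Trans n"
        using a b by (auto simp: SnegS_def)
      then show False
      proof cases
        case 1
        then show False
        proof (elim disjE)
          assume "a = ?s" "b = ?s"
          then have "?s (?s (i - 1)) = j" using ev[of "i - 1"] g1 by simp
          then show False using s1 ij by (simp add: ncycle_def)
        next
          assume "a = ?s" "b = ?r"
          then have "?s (?r i) = j + 1" using ev[of i] g1 by simp
          moreover have "?s (?r i) = i" using nc_o_inv by (metis comp_apply id_apply)
          ultimately show False using ij by simp
        next
          assume "a = ?r" "b = ?s"
          then have "?r (?s i) = j + 1" using ev[of i] g1 by simp
          then show False using ij ncinv_nc by simp
        next
          assume "a = ?r" "b = ?r"
          then have "?r (?r i) = j + 1" using ev[of i] g1 by simp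
          then show False using ij r1 by (simp add: ncinv_def)
        qed
      next
        case 2
        then obtain x y where fx: "\<forall>z. z \<noteq> x \<longrightarrow> z \<noteq> y \<longrightarrow> b z = z" using Trans_fix by blast
        have mv: "z \<in> {x,y}" if "?g z \<noteq> ?s z" for z by (metis fx that ev 2(1) 2(2) insertCI)
        have "i - 1 \<in> {x,y}" by (rule mv) (use g1 s1 ij in simp)
        moreover have "i \<in> {x,y}" by (rule mv) (use g1 s1 ij in simp)
        moreover have "j \<in> {x,y}" by (rule mv) (use g1 s1 ij in simp)
        ultimately show False using ij by auto
      next
        case 3
        then obtain x y where fx: "\<forall>z. z \<noteq> x \<longrightarrow> z \<noteq> y \<longrightarrow> b z = z" using Trans_fix by blast
        have mv: "z \<in> {x,y}" if "?g z \<noteq> ?r z" for z by (metis fx that ev 3(1) 3(2) insertCI)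
        have "n \<in> {x,y}" by (rule mv) (use g1 r1 ij in simp)
        moreover have "i \<in> {x,y}" by (rule mv) (use g1 r1 ij in simp)
        moreover have "j \<in> {x,y}" by (rule mv) (use g1 r1 ij in simp)
        ultimately show False using ij by auto
      next
        case 4
        then obtain x y where fx: "\<forall>z. z \<noteq> x \<longrightarrow> z \<noteq> y \<longrightarrow> a z = z" using Trans_fix by blast
        have mv: "?s z \<in> {x,y}" if "?g z \<noteq> ?s z" for z by (metis fx that ev 4(1) 4(2) insertCI)
        have "?s (i - 1) \<in> {x,y}" by (rule mv) (use g1 s1 ij in simp)
        moreover have "?s i \<in> {x,y}" by (rule mv) (use g1 s1 ij in simp)
        moreover have "?s j \<in> {x,y}" by (rule mv) (use g1 s1 ij in simp)
        ultimately have "i \<in> {x,y}" "i + 1 \<in> {x,y}" "j + 1 \<in> {x,y}" using s1 by auto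
        then show False using ij by auto
      next
        case 5
        then obtain x y where fx: "\<forall>z. z \<noteq> x \<longrightarrow> z \<noteq> y \<longrightarrow> a z = z" using Trans_fix by blast
        have mv: "?r z \<in> {x,y}" if "?g z \<noteq> ?r z" for z by (metis fx that ev 5(1) 5(2) insertCI)
        have "?r i \<in> {x,y}" by (rule mv) (use g1 r1 ij in simp)
        moreover have "?r j \<in> {x,y}" by (rule mv) (use g1 r1 ij in simp)
        moreover have "?r n \<in> {x,y}" by (rule mv) (use g1 r1 ij in simp)
        ultimately have "i - 1 \<in> {x,y}" "j - 1 \<in> {x,y}" "n - 1 \<in> {x,y}" using r1 by auto
        moreover have "i - 1 \<noteq> j - 1" "i - 1 \<noteq> n - 1" "j - 1 \<noteq> n - 1" using ij by linarith+
        ultimately show False by (rule three_in_two)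
      next
        case 6
        obtain x1 y1 where f1: "\<forall>z. z \<noteq> x1 \<longrightarrow> z \<noteq> y1 \<longrightarrow> a z = z"
          using Trans_fix[OF 6(1)] by blast
        obtain x2 y2 where f2: "\<forall>z. z \<noteq> x2 \<longrightarrow> z \<noteq> y2 \<longrightarrow> b z = z"
          using Trans_fix[OF 6(2)] by blast
        have mv: "z \<in> {x1,y1,x2,y2}" if "?g z \<noteq> z" for z
        proof (rule ccontr)
          assume "z \<notin> {x1,y1,x2,y2}"
          then have "b z = z" "a z = z" using f1 f2 by auto
          then show False using ev[of z] that by simp
        qed
        have "i - 1 \<in> {x1,y1,x2,y2}" by (rule mv) (use g1 ij in simp)
        moreover have "i \<in> {x1,y1,x2,y2}" by (rule mv) (use g1 ij in simp)
        moreover have "j - 1 \<in> {x1,y1,x2,y2}" by (rule mv) (use g1 ij in simp)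
        moreover have "j \<in> {x1,y1,x2,y2}" by (rule mv) (use g1 ij in simp)
        moreover have "n \<in> {x1,y1,x2,y2}" by (rule mv) (use g1 ij in simp)
        ultimately have sub: "{i - 1, i, j - 1, j, n} \<subseteq> {x1,y1,x2,y2}" by blast
        have lt: "i - 1 < i" "i < j - 1" "j - 1 < j" "j < n" using ij by linarith+
        show False by (rule five_in_four[OF lt sub])
      qed
    qed
  qed
qed



definition Pset :: "nat \<Rightarrow> (nat \<times> nat) set" where
  "Pset n = {(i,j). 3 \<le> i \<and> i + 3 \<le> j \<and> j + 2 \<le> n}"

definition Qset :: "nat \<Rightarrow> (nat \<times> nat) set" where
  "Qset n = {(x,y). 1 \<le> x \<and> x < y \<and> y \<le> n} - Pset n"

abbreviation tr :: "nat \<times> nat \<Rightarrow> nat \<Rightarrow> nat" where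
  "tr \<equiv> (\<lambda>(x,y). Transposition.transpose x y)"

lemma Pset_finite: "finite (Pset n)"
proof -
  have "Pset n \<subseteq> {..n} \<times> {..n}" by (auto simp: Pset_def)
  then show ?thesis using finite_subset by blast
qed

lemma inj_tr: "inj_on tr {(x,y). x < y}"
proof (rule inj_onI, clarify)
  fix x y x' y' :: nat
  assume l: "x < y" "x' < y'" and e: "Transposition.transpose x y = Transposition.transpose x' y'"
  have e': "\<And>z. Transposition.transpose x y z = Transposition.transpose x' y' z" using e by simp
  have "x \<in> {x', y'}" using e'[of x] l by (auto simp: transpose_def split: if_splits)
  moreover have "y \<in> {x', y'}" using e'[of y] l by (auto simp: transpose_def split: if_splits)
  ultimately show "x = x' \<and> y = y'" using l by auto
qed

lemma card_Good: "card (tr ` Pset n) = card (Pset n)"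
  by (rule card_image, rule inj_on_subset[OF inj_tr]) (auto simp: Pset_def)

lemma Good_sub: "tr ` Pset n \<subseteq> SnegS n"
proof
  fix t assume "t \<in> tr ` Pset n"
  then obtain i j where ij: "(i,j) \<in> Pset n" "t = Transposition.transpose i j" by auto
  then have h: "i \<in> {1..n}" "j \<in> {1..n}" "i \<noteq> j" by (auto simp: Pset_def)
  have "Transposition.transpose i j \<in> Trans n" unfolding Trans_def using h by blast
  then show "t \<in> SnegS n" using ij by (simp add: SnegS_def)
qed

lemma Trans_sub: "Trans n \<subseteq> tr ` (Pset n \<union> Qset n)"
proof
  fix t assume "t \<in> Trans n"
  then obtain x y where t: "t = Transposition.transpose x y" "x \<in> {1..n}" "y \<in> {1..n}" "x \<noteq> y"
    by (auto simp: Trans_def)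
  show "t \<in> tr ` (Pset n \<union> Qset n)"
  proof (cases "x < y")
    case True
    then have "(x,y) \<in> Pset n \<union> Qset n" using t by (auto simp: Qset_def)
    then show ?thesis using t by force
  next
    case False
    then have "(y,x) \<in> Pset n \<union> Qset n" using t by (auto simp: Qset_def)
    moreover have "t = tr (y,x)" using t by (simp add: transpose_commute)
    ultimately show ?thesis by blast
  qed
qed

lemma Qset_finite: "finite (Qset n)"
proof -
  have "Qset n \<subseteq> {..n} \<times> {..n}" by (auto simp: Qset_def)
  then show ?thesis using finite_subset by blast
qed

lemma card_Qset: "card (Qset n) \<le> 6 * n"
proof -
  let ?A = "{1,2::nat} \<times> {1..n}" and ?B = "{1..n} \<times> {n-1,n}"
    and ?C = "(\<lambda>x. (x, x+1)) ` {1..n}" and ?D = "(\<lambda>x. (x, x+2)) ` {1..n}"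
  have "Qset n \<subseteq> ?A \<union> ?B \<union> ?C \<union> ?D"
  proof
    fix p assume "p \<in> Qset n"
    then obtain x y where p: "p = (x,y)" "1 \<le> x" "x < y" "y \<le> n" "\<not> (3 \<le> x \<and> x + 3 \<le> y \<and> y + 2 \<le> n)"
      by (auto simp: Qset_def Pset_def)
    then consider "x < 3" | "y = x + 1 \<or> y = x + 2" | "n < y + 2" by linarith
    then show "p \<in> ?A \<union> ?B \<union> ?C \<union> ?D"
    proof cases
      case 1 then have "x = 1 \<or> x = 2" using p by linarith
      then show ?thesis using p by auto
    next
      case 2 then show ?thesis using p by auto
    next
      case 3 then have "y = n - 1 \<or> y = n" using p by linarith
      then show ?thesis using p by auto
    qed
  qed
  then have "card (Qset n) \<le> card (?A \<union> ?B \<union> ?C \<union> ?D)" by (intro card_mono) auto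
  also have "\<dots> \<le> card ?A + card ?B + card ?C + card ?D"
  proof -
    have "card (?A \<union> ?B \<union> ?C \<union> ?D) \<le> card (?A \<union> ?B \<union> ?C) + card ?D" by (rule card_Un_le)
    moreover have "card (?A \<union> ?B \<union> ?C) \<le> card (?A \<union> ?B) + card ?C" by (rule card_Un_le)
    moreover have "card (?A \<union> ?B) \<le> card ?A + card ?B" by (rule card_Un_le)
    ultimately show ?thesis by linarith
  qed
  also have "\<dots> \<le> 2 * n + 2 * n + n + n"
  proof -
    have "card ?A \<le> 2 * n" by (simp add: card_cartesian_product)
    moreover have "card ?B \<le> n * 2"
    proof -
      have "card {n-1,n} \<le> 2" using card_length[of "[n-1,n]"] by simp
      then have "card {1..n} * card {n-1,n} \<le> n * 2" by simp
      then show ?thesis by (simp only: card_cartesian_product)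
    qed
    moreover have "card ?C \<le> n"
      using card_image_le[OF finite_atLeastAtMost, of "\<lambda>x. (x, x+1)" 1 n] by simp
    moreover have "card ?D \<le> n"
      using card_image_le[OF finite_atLeastAtMost, of "\<lambda>x. (x, x+2)" 1 n] by simp
    ultimately show ?thesis by linarith
  qed
  finally show ?thesis by simp
qed

lemma card_Sneg: "card (SnegS n) \<le> card (Pset n) + 6 * n + 2"
proof -
  have "card (Trans n) \<le> card (tr ` (Pset n \<union> Qset n))"
    by (rule card_mono[OF _ Trans_sub]) (simp add: Pset_finite Qset_finite)
  also have "\<dots> \<le> card (Pset n \<union> Qset n)" by (rule card_image_le) (simp add: Pset_finite Qset_finite)
  also have "\<dots> \<le> card (Pset n) + card (Qset n)" by (rule card_Un_le)
  finally have "card (Trans n) \<le> card (Pset n) + 6 * n" using card_Qset[of n] by linarith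
  moreover have "card (SnegS n) \<le> card (Trans n) + 2"
  proof -
    have ft: "finite (Trans n)" using Trans_sym sym_finite finite_subset by blast
    have ins: "card (insert x A) \<le> Suc (card A)" if "finite A" for x and A :: "(nat \<Rightarrow> nat) set"
      using that by (simp add: card_insert_if)
    show ?thesis unfolding SnegS_def using ins[OF ft, of "ncinv n"] ins[of "insert (ncinv n) (Trans n)" "ncycle n"] ft by simp
  qed
  ultimately show ?thesis by linarith
qed

lemma card_Pset: "(n div 2 - 2) * (n - n div 2 - 4) \<le> card (Pset n)"
proof -
  let ?m = "n div 2"
  have "{3..?m} \<times> {?m+3..n-2} \<subseteq> Pset n" by (auto simp: Pset_def)
  then have "card ({3..?m} \<times> {?m+3..n-2}) \<le> card (Pset n)" by (intro card_mono Pset_finite)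
  moreover have "card {3..?m} = ?m - 2" by simp
  moreover have "card {?m+3..n-2} = n - ?m - 4" by simp
  ultimately show ?thesis by (simp add: card_cartesian_product)
qed



lemma wl_neg_sigma: "3 \<le> n \<Longrightarrow> word_len (SnegS n) (ncycle n) = 1"
proof -
  assume n: "3 \<le> n"
  have s: "ncycle n \<in> SnegS n" by (simp add: SnegS_def)
  have ne: "ncycle n \<noteq> id" using n by (auto intro!: neq_at[of _ 1] simp: ncycle_def)
  have "word_len (SnegS n) (ncycle n) \<le> 1" using wl_le[of "[ncycle n]"] s by (simp add: wp1)
  moreover have "1 \<le> word_len (SnegS n) (ncycle n)"
  proof (rule wl_ge)
    show "\<exists>ws. set ws \<subseteq> SnegS n \<and> word_prod ws = ncycle n"
      using s by (intro exI[of _ "[ncycle n]"]) (simp add: wp1)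
    fix ws assume "set ws \<subseteq> SnegS n" "word_prod ws = ncycle n"
    then show "1 \<le> length ws" using ne wp0 by (cases ws) auto
  qed
  ultimately show ?thesis by simp
qed

lemma aux_lin:
  fixes A X Y r :: real
  assumes "A \<le> Y" "400*(r/16) \<le> X" "A = X" "20 \<le> r"
  shows "3*(6*r+2) < Y"
proof -
  have "25 * r \<le> X" using assms(2) by simp
  then have "18 * r + 6 < Y" using assms by linarith
  then show ?thesis by (simp add: algebra_simps)
qed

lemma av_neg:
  assumes n: "20 \<le> n" and e: "400 \<le> \<epsilon> * real n"
  shows "Av (SnegS n) (ncycle n) > 3 - \<epsilon>"
proof -
  let ?S = "SnegS n" and ?f = "\<lambda>a. real (word_len (SnegS n) (inv a \<circ> ncycle n \<circ> a))"
  have fin: "finite ?S" using Sneg_sym sym_finite finite_subset by blast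
  have "(\<Sum>a\<in>tr ` Pset n. ?f a) \<le> (\<Sum>a\<in>?S. ?f a)"
    by (rule sum_mono2[OF fin Good_sub]) simp
  moreover have "(\<Sum>a\<in>tr ` Pset n. (3::real)) \<le> (\<Sum>a\<in>tr ` Pset n. ?f a)"
  proof (rule sum_mono)
    fix a assume "a \<in> tr ` Pset n"
    then obtain i j where "(i,j) \<in> Pset n" "a = Transposition.transpose i j" by auto
    then show "3 \<le> ?f a" using good_conj[of i j n] by (auto simp: Pset_def)
  qed
  ultimately have sum3: "3 * real (card (Pset n)) \<le> (\<Sum>a\<in>?S. ?f a)"
    using card_Good[of n] by simp
  let ?G = "real (card (Pset n))" and ?K = "6 * real n + 2"
  have cS: "real (card ?S) \<le> ?G + ?K" using card_Sneg[of n] by linarith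
  have cSp: "real (card ?S) > 0"
  proof -
    have "ncycle n \<in> ?S" by (simp add: SnegS_def)
    then have "card ?S > 0" using fin card_gt_0_iff by blast
    then show ?thesis by simp
  qed
  define m where "m = n div 2"
  have m1: "real n \<le> 2 * real m + 1" "2 * real m \<le> real n" unfolding m_def by linarith+
  have g1: "real ((m - 2) * (n - m - 4)) \<le> ?G" using card_Pset[of n] unfolding m_def by linarith
  have g2: "real ((m - 2) * (n - m - 4)) = (real m - 2) * (real n - real m - 4)"
    using m1 n by (simp add: of_nat_diff)
  have g3: "(real m - 2) * (real n - real m - 4) \<le> ?G" using g1 unfolding g2 .
  have h1: "real n / 4 \<le> real m - 2" "real n / 4 \<le> real n - real m - 4" using m1 n by linarith+
  have "(real n / 4) * (real n / 4) \<le> (real m - 2) * (real n - real m - 4)"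
    by (rule mult_mono[OF h1]) (use h1 in auto)
  then have "(real n / 4) * (real n / 4) \<le> ?G" using g3 by linarith
  have ep: "\<epsilon> > 0" using e n by (metis not_le mult_nonpos_nonneg of_nat_0_le_iff order_trans zero_less_numeral le_less_trans less_le_not_le)
  have "\<epsilon> * ((real n / 4) * (real n / 4)) \<le> \<epsilon> * ?G"
    using \<open>(real n / 4) * (real n / 4) \<le> ?G\<close> ep by (intro mult_left_mono) auto
  moreover have "400 * (real n / 16) \<le> (\<epsilon> * real n) * (real n / 16)"
    using e by (intro mult_right_mono) auto
  moreover have "\<epsilon> * ((real n / 4) * (real n / 4)) = (\<epsilon> * real n) * (real n / 16)" by simp
  moreover have "real n \<ge> 20" using n by simp
  ultimately have eG: "\<epsilon> * ?G > 3 * ?K" by (rule aux_lin)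
  have "\<epsilon> * ?G > 0" using eG by (smt (verit) of_nat_0_le_iff)
  then have Gp: "?G > 0" using ep by (rule zero_less_mult_pos)
  have "3 - \<epsilon> < 3 * ?G / (?G + ?K)"
  proof -
    have "\<epsilon> * ?K > 0" using ep n by simp
    then have "(3 - \<epsilon>) * (?G + ?K) < 3 * ?G" using eG by (simp add: algebra_simps)
    then show ?thesis using Gp n by (simp add: less_divide_eq)
  qed
  also have "\<dots> \<le> 3 * ?G / real (card ?S)"
    using cS cSp Gp by (intro divide_left_mono) auto
  also have "\<dots> \<le> Av ?S (ncycle n)"
    unfolding Av_def using sum3 cSp by (intro divide_right_mono) auto
  finally show ?thesis .
qed



theorem mainTheorem15:
  fixes \<epsilon> :: real
  assumes "\<epsilon> > 0"
  shows "\<exists>N. \<forall>n\<ge>N. \<exists>Spos Sneg.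
     sym_gen_set n Spos \<and> sym_gen_set n Sneg \<and>
     word_len Spos (ncycle n) = 2 \<and> Av Spos (ncycle n) < 1 + \<epsilon> \<and>
       curv Spos (ncycle n) > (1 - \<epsilon>) / 2 \<and>
     word_len Sneg (ncycle n) = 1 \<and> Av Sneg (ncycle n) > 3 - \<epsilon> \<and>
       curv Sneg (ncycle n) < -2 + \<epsilon>"
proof (intro exI[of _ "max 20 (nat \<lceil>400 / \<epsilon>\<rceil>)"] allI impI)
  fix n :: nat assume nN: "max 20 (nat \<lceil>400 / \<epsilon>\<rceil>) \<le> n"
  then have n: "20 \<le> n" by simp
  have "400 / \<epsilon> \<le> real n" using nN by linarith
  then have e: "400 \<le> \<epsilon> * real n" using assms by (simp add: divide_le_eq mult.commute)
  have e2: "2 < \<epsilon> * real n" using e by linarith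
  have p1: "word_len (SposS n) (ncycle n) = 2" using n by (intro wl_pos_sigma) simp
  have p2: "Av (SposS n) (ncycle n) < 1 + \<epsilon>" using n e2 by (intro av_pos) auto
  have q1: "word_len (SnegS n) (ncycle n) = 1" using n by (intro wl_neg_sigma) simp
  have q2: "Av (SnegS n) (ncycle n) > 3 - \<epsilon>" using n e by (intro av_neg) auto
  show "\<exists>Spos Sneg.
     sym_gen_set n Spos \<and> sym_gen_set n Sneg \<and>
     word_len Spos (ncycle n) = 2 \<and> Av Spos (ncycle n) < 1 + \<epsilon> \<and>
       curv Spos (ncycle n) > (1 - \<epsilon>) / 2 \<and>
     word_len Sneg (ncycle n) = 1 \<and> Av Sneg (ncycle n) > 3 - \<epsilon> \<and>
       curv Sneg (ncycle n) < -2 + \<epsilon>"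
  proof (rule exI[of _ "SposS n"], rule exI[of _ "SnegS n"], intro conjI)
    show "sym_gen_set n (SposS n)" using n by (intro pos_gen) simp
    show "sym_gen_set n (SnegS n)" using n by (intro neg_gen) simp
    show "word_len (SposS n) (ncycle n) = 2" by (rule p1)
    show "Av (SposS n) (ncycle n) < 1 + \<epsilon>" by (rule p2)
    show "curv (SposS n) (ncycle n) > (1 - \<epsilon>) / 2"
      unfolding curv_def p1 using p2 by simp
    show "word_len (SnegS n) (ncycle n) = 1" by (rule q1)
    show "Av (SnegS n) (ncycle n) > 3 - \<epsilon>" by (rule q2)
    show "curv (SnegS n) (ncycle n) < -2 + \<epsilon>"
      unfolding curv_def q1 using q2 by simp
  qed
qed

end
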